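(* The following assignments define a 2-functor $\mathrm{AM}:\mathbf{Adj}(\mathbf{IdxPos})\to\square\text{-}\mathbf{IdxPos}$: an adjunction $\mathbb A=(P^{\mathbb A},Q^{\mathbb A},L^{\mathbb A},\lambda^{\mathbb A},R^{\mathbb A},\rho^{\mathbb A},\eta^{\mathbb A},\epsilon^{\mathbb A})$ is sent to $(Q^{\mathbb A}\circ(L^{\mathbb A})^{op},\square^{\mathbb A})$ where $\square^{\mathbb A}_X=\lambda^{\mathbb A}_X\circ P^{\mathbb A}(\eta^{\mathbb A}_X)\circ\rho^{\mathbb A}_{L^{\mathbb A}X}$; a 1-arrow $(F,f,G,g,\theta):\mathbb A\to\mathbb B$ is sent to $(F,g(L^{\mathbb A})^{op})$, i.e. the functor $F$ together with the natural transformation with components $g_{L^{\mathbb A}X}:Q^{\mathbb A}(L^{\mathbb A}X)\to Q^{\mathbb B}(GL^{\mathbb A}X)=Q^{\mathbb B}(L^{\mathbb B}FX)$; a 2-arrow $(\alpha,\beta)$ is sent to $\alpha$.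
   Context: A doctrine is a functor $P:\mathcal C^{op}\to\mathbf{Pos}$; for $t:X\to Y$, $P(t):PY\to PX$ is reindexing. In the 2-category $\mathbf{IdxPos}$, a 1-arrow $(F,f):P\to Q$ (with $P:\mathcal C^{op}\to\mathbf{Pos}$, $Q:\mathcal D^{op}\to\mathbf{Pos}$) is a functor $F:\mathcal C\to\mathcal D$ with a natural transformation $f:P\Rightarrow Q\circ F^{op}$; a 2-arrow $\theta:(F,f)\Rightarrow(F',f')$ is a natural transformation $\theta:F\Rightarrow F'$ with $f_X(\alpha)\le Q(\theta_X)(f'_X(\alpha))$ for all $X,\alpha$; composition of $(G,g)$ then $(F,f)$ is $(FG,(fG^{op})\cdot g)$ (components $f_{GX}\circ g_X$), and 2-arrows compose as natural transformations. An interior operator on a doctrine $M:\mathcal C^{op}\to\mathbf{Pos}$ is a natural transformation $\square:M\Rightarrow M$ with $\square_X(\alpha)\le\alpha$ and $\square_X(\alpha)\le\square_X(\square_X\alpha)$. The 2-category $\square\text{-}\mathbf{IdxPos}$ has objects pairs $(M,\square)$ of a doctrine with an interior operator; a 1-arrow $(M,\square)\to(N,\square')$ is a 1-arrow $(F,f):M\to N$ of $\mathbf{IdxPos}$ with $f_X(\square_X\alpha)\le\square'_{FX}(f_X\alpha)$ for all $X,\alpha$; 2-arrows and compositions are those of $\mathbf{IdxPos}$. An adjunction in $\mathbf{IdxPos}$ is written as an octuple $\mathbb A=(P^{\mathbb A},Q^{\mathbb A},L^{\mathbb A},\lambda^{\mathbb A},R^{\mathbb A},\rho^{\mathbb A},\eta^{\mathbb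 A},\epsilon^{\mathbb A})$ with $P^{\mathbb A}:(\mathcal C^{\mathbb A})^{op}\to\mathbf{Pos}$, $Q^{\mathbb A}:(\mathcal D^{\mathbb A})^{op}\to\mathbf{Pos}$, meaning: $L^{\mathbb A}\dashv R^{\mathbb A}$ is an adjunction of categories with unit $\eta^{\mathbb A}$ and counit $\epsilon^{\mathbb A}$, $\lambda^{\mathbb A}:P^{\mathbb A}\Rightarrow Q^{\mathbb A}(L^{\mathbb A})^{op}$ and $\rho^{\mathbb A}:Q^{\mathbb A}\Rightarrow P^{\mathbb A}(R^{\mathbb A})^{op}$ are natural, $\alpha\le P^{\mathbb A}(\eta_X)(\rho_{LX}(\lambda_X\alpha))$ and $\lambda_{RY}(\rho_Y\beta)\le Q^{\mathbb A}(\epsilon_Y)(\beta)$ (dropping superscripts). The 2-category $\mathbf{Adj}(\mathbf{IdxPos})$ has such adjunctions as objects. A 1-arrow $(F,f,G,g,\theta):\mathbb A\to\mathbb B$ consists of 1-arrows $(F,f):P^{\mathbb A}\to P^{\mathbb B}$, $(G,g):Q^{\mathbb A}\to Q^{\mathbb B}$ of $\mathbf{IdxPos}$ and a natural transformation $\theta:FR^{\mathbb A}\Rightarrow R^{\mathbb B}G$ such that: $GL^{\mathbb A}=L^{\mathbb B}F$; $(\theta L^{\mathbb A})\cdot(F\eta^{\mathbb A})=\eta^{\mathbb B}F$; $g_{L^{\mathbb A}X}\circ\lambda^{\mathbb A}_X=\lambda^{\mathbb B}_{FX}\circ f_X$ for all $X$; and $f_{R^{\mathbb A}Y}(\rho^{\mathbb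 A}_Y\beta)\le P^{\mathbb B}(\theta_Y)(\rho^{\mathbb B}_{GY}(g_Y\beta))$ for all $Y$ and $\beta\in Q^{\mathbb A}Y$. A 2-arrow $(\alpha,\beta):(F,f,G,g,\theta)\Rightarrow(F',f',G',g',\theta')$ consists of 2-arrows $\alpha:(F,f)\Rightarrow(F',f')$ and $\beta:(G,g)\Rightarrow(G',g')$ of $\mathbf{IdxPos}$ with $L^{\mathbb B}\alpha=\beta L^{\mathbb A}$ and $\theta'\cdot(\alpha R^{\mathbb A})=(R^{\mathbb B}\beta)\cdot\theta$. Composition of 1-arrows composes the two 1-arrow components in $\mathbf{IdxPos}$ and the $\theta$'s as $(\theta'G)\cdot(F'\theta)$; 2-arrows compose componentwise. *)

theory Defs
  imports Main
begin

record ('o,'a) cat =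
  cobj :: "'o set"
  carr :: "'a set"
  cdom :: "'a \<Rightarrow> 'o"
  ccod :: "'a \<Rightarrow> 'o"
  ccomp :: "'a \<Rightarrow> 'a \<Rightarrow> 'a"   (* ccomp C g f = g \<circ> f *)
  cid :: "'o \<Rightarrow> 'a"

definition hom :: "('o,'a) cat \<Rightarrow> 'o \<Rightarrow> 'o \<Rightarrow> 'a set" where
  "hom C X Y = {f \<in> carr C. cdom C f = X \<and> ccod C f = Y}"

definition category :: "('o,'a) cat \<Rightarrow> bool" where
  "category C \<longleftrightarrow>
    (\<forall>f\<in>carr C. cdom C f \<in> cobj C \<and> ccod C f \<in> cobj C) \<and>
    (\<forall>X\<in>cobj C. cid C X \<in> hom C X X) \<and>
    (\<forall>f\<in>carr C. \<forall>g\<in>carr C. ccod C f = cdom C g \<longrightarrow>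
        ccomp C g f \<in> hom C (cdom C f) (ccod C g)) \<and>
    (\<forall>f\<in>carr C. ccomp C f (cid C (cdom C f)) = f \<and> ccomp C (cid C (ccod C f)) f = f) \<and>
    (\<forall>f\<in>carr C. \<forall>g\<in>carr C. \<forall>h\<in>carr C.
        ccod C f = cdom C g \<and> ccod C g = cdom C h \<longrightarrow>
        ccomp C h (ccomp C g f) = ccomp C (ccomp C h g) f)"

record ('o1,'a1,'o2,'a2) ftor =
  fo :: "'o1 \<Rightarrow> 'o2"
  fa :: "'a1 \<Rightarrow> 'a2"

definition is_functor :: "('o1,'a1) cat \<Rightarrow> ('o2,'a2) cat \<Rightarrow> ('o1,'a1,'o2,'a2) ftor \<Rightarrow> bool" where
  "is_functor C D F \<longleftrightarrow>
    (\<forall>X\<in>cobj C. fo F X \<in> cobj D) \<and>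
    (\<forall>f\<in>carr C. fa F f \<in> hom D (fo F (cdom C f)) (fo F (ccod C f))) \<and>
    (\<forall>X\<in>cobj C. fa F (cid C X) = cid D (fo F X)) \<and>
    (\<forall>f\<in>carr C. \<forall>g\<in>carr C. ccod C f = cdom C g \<longrightarrow>
        fa F (ccomp C g f) = ccomp D (fa F g) (fa F f))"

definition fid :: "('o,'a,'o,'a) ftor" where
  "fid = \<lparr>fo = (\<lambda>X. X), fa = (\<lambda>f. f)\<rparr>"

definition fcomp :: "('o2,'a2,'o3,'a3) ftor \<Rightarrow> ('o1,'a1,'o2,'a2) ftor \<Rightarrow> ('o1,'a1,'o3,'a3) ftor" where
  "fcomp G F = \<lparr>fo = (\<lambda>X. fo G (fo F X)), fa = (\<lambda>f. fa G (fa F f))\<rparr>"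

definition feq :: "('o1,'a1) cat \<Rightarrow> ('o1,'a1,'o2,'a2) ftor \<Rightarrow> ('o1,'a1,'o2,'a2) ftor \<Rightarrow> bool" where
  "feq C F G \<longleftrightarrow> (\<forall>X\<in>cobj C. fo F X = fo G X) \<and> (\<forall>f\<in>carr C. fa F f = fa G f)"

definition is_nat :: "('o1,'a1) cat \<Rightarrow> ('o2,'a2) cat \<Rightarrow> ('o1,'a1,'o2,'a2) ftor \<Rightarrow>
    ('o1,'a1,'o2,'a2) ftor \<Rightarrow> ('o1 \<Rightarrow> 'a2) \<Rightarrow> bool" where
  "is_nat C D F G th \<longleftrightarrow>
    (\<forall>X\<in>cobj C. th X \<in> hom D (fo F X) (fo G X)) \<and>
    (\<forall>f\<in>carr C. ccomp D (th (ccod C f)) (fa F f) = ccomp D (fa G f) (th (cdom C f)))"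

definition nat_eq :: "('o1,'a1) cat \<Rightarrow> ('o1 \<Rightarrow> 'a2) \<Rightarrow> ('o1 \<Rightarrow> 'a2) \<Rightarrow> bool" where
  "nat_eq C th th' \<longleftrightarrow> (\<forall>X\<in>cobj C. th X = th' X)"

definition nat_id :: "('o2,'a2) cat \<Rightarrow> ('o1,'a1,'o2,'a2) ftor \<Rightarrow> ('o1 \<Rightarrow> 'a2)" where
  "nat_id D F = (\<lambda>X. cid D (fo F X))"

definition vcomp :: "('o2,'a2) cat \<Rightarrow> ('o1 \<Rightarrow> 'a2) \<Rightarrow> ('o1 \<Rightarrow> 'a2) \<Rightarrow> ('o1 \<Rightarrow> 'a2)" where
  "vcomp D psi th = (\<lambda>X. ccomp D (psi X) (th X))"

definition hcomp :: "('o3,'a3) cat \<Rightarrow> ('o2,'a2,'o3,'a3) ftor \<Rightarrow> ('o2 \<Rightarrow> 'a3) \<Rightarrow>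
    ('o1,'a1,'o2,'a2) ftor \<Rightarrow> ('o1 \<Rightarrow> 'a2) \<Rightarrow> ('o1 \<Rightarrow> 'a3)" where
  "hcomp E H al' F' al = (\<lambda>X. ccomp E (al' (fo F' X)) (fa H (al X)))"

record ('o,'a,'e) doctrine =
  dcar :: "'o \<Rightarrow> 'e set"
  dle :: "'o \<Rightarrow> 'e \<Rightarrow> 'e \<Rightarrow> bool"
  drx :: "'a \<Rightarrow> 'e \<Rightarrow> 'e"   (* reindexing P(t) : P(cod t) -> P(dom t) *)

definition is_doctrine :: "('o,'a) cat \<Rightarrow> ('o,'a,'e) doctrine \<Rightarrow> bool" where
  "is_doctrine C P \<longleftrightarrow>
    (\<forall>X\<in>cobj C.
       (\<forall>a\<in>dcar P X. dle P X a a) \<and>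
       (\<forall>a\<in>dcar P X. \<forall>b\<in>dcar P X. dle P X a b \<and> dle P X b a \<longrightarrow> a = b) \<and>
       (\<forall>a\<in>dcar P X. \<forall>b\<in>dcar P X. \<forall>c\<in>dcar P X. dle P X a b \<and> dle P X b c \<longrightarrow> dle P X a c)) \<and>
    (\<forall>t\<in>carr C. \<forall>a\<in>dcar P (ccod C t). drx P t a \<in> dcar P (cdom C t)) \<and>
    (\<forall>t\<in>carr C. \<forall>a\<in>dcar P (ccod C t). \<forall>b\<in>dcar P (ccod C t).
        dle P (ccod C t) a b \<longrightarrow> dle P (cdom C t) (drx P t a) (drx P t b)) \<and>
    (\<forall>X\<in>cobj C. \<forall>a\<in>dcar P X. drx P (cid C X) a = a) \<and>
    (\<forall>f\<in>carr C. \<forall>g\<in>carr C. ccod C f = cdom C g \<longrightarrow>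
        (\<forall>a\<in>dcar P (ccod C g). drx P (ccomp C g f) a = drx P f (drx P g a)))"

definition doc_comp :: "('o2,'a2,'e) doctrine \<Rightarrow> ('o1,'a1,'o2,'a2) ftor \<Rightarrow> ('o1,'a1,'e) doctrine" where
  "doc_comp Q F = \<lparr>dcar = (\<lambda>X. dcar Q (fo F X)), dle = (\<lambda>X. dle Q (fo F X)),
                   drx = (\<lambda>t. drx Q (fa F t))\<rparr>"

definition is_dnat :: "('o,'a) cat \<Rightarrow> ('o,'a,'e1) doctrine \<Rightarrow> ('o,'a,'e2) doctrine \<Rightarrow>
    ('o \<Rightarrow> 'e1 \<Rightarrow> 'e2) \<Rightarrow> bool" where
  "is_dnat C P P' f \<longleftrightarrow>
    (\<forall>X\<in>cobj C. \<forall>a\<in>dcar P X. f X a \<in> dcar P' X) \<and>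
    (\<forall>X\<in>cobj C. \<forall>a\<in>dcar P X. \<forall>b\<in>dcar P X. dle P X a b \<longrightarrow> dle P' X (f X a) (f X b)) \<and>
    (\<forall>t\<in>carr C. \<forall>a\<in>dcar P (ccod C t). f (cdom C t) (drx P t a) = drx P' t (f (ccod C t) a))"

type_synonym ('o1,'a1,'o2,'a2,'e1,'e2) idx1 = "('o1,'a1,'o2,'a2) ftor \<times> ('o1 \<Rightarrow> 'e1 \<Rightarrow> 'e2)"

definition idx_1arrow :: "('o1,'a1) cat \<Rightarrow> ('o2,'a2) cat \<Rightarrow> ('o1,'a1,'e1) doctrine \<Rightarrow>
    ('o2,'a2,'e2) doctrine \<Rightarrow> ('o1,'a1,'o2,'a2,'e1,'e2) idx1 \<Rightarrow> bool" where
  "idx_1arrow C D P Q Ff \<longleftrightarrow> is_functor C D (fst Ff) \<and> is_dnat C P (doc_comp Q (fst Ff)) (snd Ff)"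

definition idx_2arrow :: "('o1,'a1) cat \<Rightarrow> ('o2,'a2) cat \<Rightarrow> ('o1,'a1,'e1) doctrine \<Rightarrow>
    ('o2,'a2,'e2) doctrine \<Rightarrow> ('o1,'a1,'o2,'a2,'e1,'e2) idx1 \<Rightarrow>
    ('o1,'a1,'o2,'a2,'e1,'e2) idx1 \<Rightarrow> ('o1 \<Rightarrow> 'a2) \<Rightarrow> bool" where
  "idx_2arrow C D P Q Ff Ff' th \<longleftrightarrow>
    is_nat C D (fst Ff) (fst Ff') th \<and>
    (\<forall>X\<in>cobj C. \<forall>a\<in>dcar P X.
       dle Q (fo (fst Ff) X) (snd Ff X a) (drx Q (th X) (snd Ff' X a)))"

definition idx_id1 :: "('o,'a,'o,'a,'e,'e) idx1" where
  "idx_id1 = (fid, (\<lambda>X a. a))"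

definition idx_comp1 :: "('o2,'a2,'o3,'a3,'e2,'e3) idx1 \<Rightarrow> ('o1,'a1,'o2,'a2,'e1,'e2) idx1 \<Rightarrow>
    ('o1,'a1,'o3,'a3,'e1,'e3) idx1" where
  "idx_comp1 Gg Ff = (fcomp (fst Gg) (fst Ff), (\<lambda>X a. snd Gg (fo (fst Ff) X) (snd Ff X a)))"

definition idx_eq1 :: "('o1,'a1) cat \<Rightarrow> ('o1,'a1,'e1) doctrine \<Rightarrow>
    ('o1,'a1,'o2,'a2,'e1,'e2) idx1 \<Rightarrow> ('o1,'a1,'o2,'a2,'e1,'e2) idx1 \<Rightarrow> bool" where
  "idx_eq1 C P Ff Gg \<longleftrightarrow> feq C (fst Ff) (fst Gg) \<and>
     (\<forall>X\<in>cobj C. \<forall>a\<in>dcar P X. snd Ff X a = snd Gg X a)"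

definition interior_op :: "('o,'a) cat \<Rightarrow> ('o,'a,'e) doctrine \<Rightarrow> ('o \<Rightarrow> 'e \<Rightarrow> 'e) \<Rightarrow> bool" where
  "interior_op C M bx \<longleftrightarrow> is_dnat C M M bx \<and>
     (\<forall>X\<in>cobj C. \<forall>a\<in>dcar M X. dle M X (bx X a) a \<and> dle M X (bx X a) (bx X (bx X a)))"

definition box_1arrow :: "('o1,'a1) cat \<Rightarrow> ('o2,'a2) cat \<Rightarrow> ('o1,'a1,'e1) doctrine \<Rightarrow>
    ('o1 \<Rightarrow> 'e1 \<Rightarrow> 'e1) \<Rightarrow> ('o2,'a2,'e2) doctrine \<Rightarrow> ('o2 \<Rightarrow> 'e2 \<Rightarrow> 'e2) \<Rightarrow>
    ('o1,'a1,'o2,'a2,'e1,'e2) idx1 \<Rightarrow> bool" where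
  "box_1arrow C D M bx N bx' Ff \<longleftrightarrow> idx_1arrow C D M N Ff \<and>
     (\<forall>X\<in>cobj C. \<forall>a\<in>dcar M X.
        dle N (fo (fst Ff) X) (snd Ff X (bx X a)) (bx' (fo (fst Ff) X) (snd Ff X a)))"

record ('oc,'ac,'od,'ad,'e1,'e2) adj =
  aC :: "('oc,'ac) cat"
  aD :: "('od,'ad) cat"
  aP :: "('oc,'ac,'e1) doctrine"
  aQ :: "('od,'ad,'e2) doctrine"
  aL :: "('oc,'ac,'od,'ad) ftor"
  alam :: "'oc \<Rightarrow> 'e1 \<Rightarrow> 'e2"
  aR :: "('od,'ad,'oc,'ac) ftor"
  arho :: "'od \<Rightarrow> 'e2 \<Rightarrow> 'e1"
  aeta :: "'oc \<Rightarrow> 'ac"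
  aeps :: "'od \<Rightarrow> 'ad"

definition is_adj :: "('oc,'ac,'od,'ad,'e1,'e2) adj \<Rightarrow> bool" where
  "is_adj A \<longleftrightarrow>
    category (aC A) \<and> category (aD A) \<and>
    is_doctrine (aC A) (aP A) \<and> is_doctrine (aD A) (aQ A) \<and>
    is_functor (aC A) (aD A) (aL A) \<and> is_functor (aD A) (aC A) (aR A) \<and>
    is_nat (aC A) (aC A) fid (fcomp (aR A) (aL A)) (aeta A) \<and>
    is_nat (aD A) (aD A) (fcomp (aL A) (aR A)) fid (aeps A) \<and>
    (\<forall>X\<in>cobj (aC A). ccomp (aD A) (aeps A (fo (aL A) X)) (fa (aL A) (aeta A X))
                        = cid (aD A) (fo (aL A) X)) \<and>
    (\<forall>Y\<in>cobj (aD A). ccomp (aC A) (fa (aR A) (aeps A Y)) (aeta A (fo (aR A) Y))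
                        = cid (aC A) (fo (aR A) Y)) \<and>
    is_dnat (aC A) (aP A) (doc_comp (aQ A) (aL A)) (alam A) \<and>
    is_dnat (aD A) (aQ A) (doc_comp (aP A) (aR A)) (arho A) \<and>
    (\<forall>X\<in>cobj (aC A). \<forall>a\<in>dcar (aP A) X.
       dle (aP A) X a (drx (aP A) (aeta A X) (arho A (fo (aL A) X) (alam A X a)))) \<and>
    (\<forall>Y\<in>cobj (aD A). \<forall>b\<in>dcar (aQ A) Y.
       dle (aQ A) (fo (aL A) (fo (aR A) Y)) (alam A (fo (aR A) Y) (arho A Y b)) (drx (aQ A) (aeps A Y) b))"

record ('oc,'ac,'od,'ad,'e1,'e2,'oc2,'ac2,'od2,'ad2,'f1,'f2) amor =
  mF :: "('oc,'ac,'oc2,'ac2) ftor"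
  mf :: "'oc \<Rightarrow> 'e1 \<Rightarrow> 'f1"
  mG :: "('od,'ad,'od2,'ad2) ftor"
  mg :: "'od \<Rightarrow> 'e2 \<Rightarrow> 'f2"
  mth :: "'od \<Rightarrow> 'ac2"

definition is_adj_1arrow :: "('oc,'ac,'od,'ad,'e1,'e2) adj \<Rightarrow> ('oc2,'ac2,'od2,'ad2,'f1,'f2) adj \<Rightarrow>
    ('oc,'ac,'od,'ad,'e1,'e2,'oc2,'ac2,'od2,'ad2,'f1,'f2) amor \<Rightarrow> bool" where
  "is_adj_1arrow A B M \<longleftrightarrow>
    idx_1arrow (aC A) (aC B) (aP A) (aP B) (mF M, mf M) \<and>
    idx_1arrow (aD A) (aD B) (aQ A) (aQ B) (mG M, mg M) \<and>
    is_nat (aD A) (aC B) (fcomp (mF M) (aR A)) (fcomp (aR B) (mG M)) (mth M) \<and>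
    feq (aC A) (fcomp (mG M) (aL A)) (fcomp (aL B) (mF M)) \<and>
    (\<forall>X\<in>cobj (aC A). ccomp (aC B) (mth M (fo (aL A) X)) (fa (mF M) (aeta A X))
                       = aeta B (fo (mF M) X)) \<and>
    (\<forall>X\<in>cobj (aC A). \<forall>a\<in>dcar (aP A) X.
       mg M (fo (aL A) X) (alam A X a) = alam B (fo (mF M) X) (mf M X a)) \<and>
    (\<forall>Y\<in>cobj (aD A). \<forall>b\<in>dcar (aQ A) Y.
       dle (aP B) (fo (mF M) (fo (aR A) Y)) (mf M (fo (aR A) Y) (arho A Y b))
         (drx (aP B) (mth M Y) (arho B (fo (mG M) Y) (mg M Y b))))"

definition is_adj_2arrow :: "('oc,'ac,'od,'ad,'e1,'e2) adj \<Rightarrow> ('oc2,'ac2,'od2,'ad2,'f1,'f2) adj \<Rightarrow>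
    ('oc,'ac,'od,'ad,'e1,'e2,'oc2,'ac2,'od2,'ad2,'f1,'f2) amor \<Rightarrow>
    ('oc,'ac,'od,'ad,'e1,'e2,'oc2,'ac2,'od2,'ad2,'f1,'f2) amor \<Rightarrow>
    ('oc \<Rightarrow> 'ac2) \<times> ('od \<Rightarrow> 'ad2) \<Rightarrow> bool" where
  "is_adj_2arrow A B M N ab \<longleftrightarrow>
    idx_2arrow (aC A) (aC B) (aP A) (aP B) (mF M, mf M) (mF N, mf N) (fst ab) \<and>
    idx_2arrow (aD A) (aD B) (aQ A) (aQ B) (mG M, mg M) (mG N, mg N) (snd ab) \<and>
    (\<forall>X\<in>cobj (aC A). fa (aL B) (fst ab X) = snd ab (fo (aL A) X)) \<and>
    (\<forall>Y\<in>cobj (aD A). ccomp (aC B) (mth N Y) (fst ab (fo (aR A) Y))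
                      = ccomp (aC B) (fa (aR B) (snd ab Y)) (mth M Y))"

definition adj_id1 :: "('oc,'ac,'od,'ad,'e1,'e2) adj \<Rightarrow>
    ('oc,'ac,'od,'ad,'e1,'e2,'oc,'ac,'od,'ad,'e1,'e2) amor" where
  "adj_id1 A = \<lparr>mF = fid, mf = (\<lambda>X a. a), mG = fid, mg = (\<lambda>Y b. b),
                mth = (\<lambda>Y. cid (aC A) (fo (aR A) Y))\<rparr>"

definition adj_comp1 :: "('oc3,'ac3,'od3,'ad3,'g1,'g2) adj \<Rightarrow>
    ('oc2,'ac2,'od2,'ad2,'f1,'f2,'oc3,'ac3,'od3,'ad3,'g1,'g2) amor \<Rightarrow>
    ('oc,'ac,'od,'ad,'e1,'e2,'oc2,'ac2,'od2,'ad2,'f1,'f2) amor \<Rightarrow>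
    ('oc,'ac,'od,'ad,'e1,'e2,'oc3,'ac3,'od3,'ad3,'g1,'g2) amor" where
  "adj_comp1 Cc M' M =
    \<lparr>mF = fcomp (mF M') (mF M), mf = (\<lambda>X a. mf M' (fo (mF M) X) (mf M X a)),
     mG = fcomp (mG M') (mG M), mg = (\<lambda>Y b. mg M' (fo (mG M) Y) (mg M Y b)),
     mth = (\<lambda>Y. ccomp (aC Cc) (mth M' (fo (mG M) Y)) (fa (mF M') (mth M Y)))\<rparr>"

definition adj_id2 :: "('oc2,'ac2,'od2,'ad2,'f1,'f2) adj \<Rightarrow>
    ('oc,'ac,'od,'ad,'e1,'e2,'oc2,'ac2,'od2,'ad2,'f1,'f2) amor \<Rightarrow>
    ('oc \<Rightarrow> 'ac2) \<times> ('od \<Rightarrow> 'ad2)" where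
  "adj_id2 B M = (nat_id (aC B) (mF M), nat_id (aD B) (mG M))"

definition adj_vcomp2 :: "('oc2,'ac2,'od2,'ad2,'f1,'f2) adj \<Rightarrow>
    ('oc \<Rightarrow> 'ac2) \<times> ('od \<Rightarrow> 'ad2) \<Rightarrow> ('oc \<Rightarrow> 'ac2) \<times> ('od \<Rightarrow> 'ad2) \<Rightarrow>
    ('oc \<Rightarrow> 'ac2) \<times> ('od \<Rightarrow> 'ad2)" where
  "adj_vcomp2 B ab' ab = (vcomp (aC B) (fst ab') (fst ab), vcomp (aD B) (snd ab') (snd ab))"

definition adj_hcomp2 :: "('oc3,'ac3,'od3,'ad3,'g1,'g2) adj \<Rightarrow>
    ('oc2,'ac2,'od2,'ad2,'f1,'f2,'oc3,'ac3,'od3,'ad3,'g1,'g2) amor \<Rightarrow>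
    ('oc2 \<Rightarrow> 'ac3) \<times> ('od2 \<Rightarrow> 'ad3) \<Rightarrow>
    ('oc,'ac,'od,'ad,'e1,'e2,'oc2,'ac2,'od2,'ad2,'f1,'f2) amor \<Rightarrow>
    ('oc \<Rightarrow> 'ac2) \<times> ('od \<Rightarrow> 'ad2) \<Rightarrow> ('oc \<Rightarrow> 'ac3) \<times> ('od \<Rightarrow> 'ad3)" where
  "adj_hcomp2 Cc M' ab' N ab =
    (hcomp (aC Cc) (mF M') (fst ab') (mF N) (fst ab), hcomp (aD Cc) (mG M') (snd ab') (mG N) (snd ab))"

definition AM_doc :: "('oc,'ac,'od,'ad,'e1,'e2) adj \<Rightarrow> ('oc,'ac,'e2) doctrine" where
  "AM_doc A = doc_comp (aQ A) (aL A)"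

definition AM_box :: "('oc,'ac,'od,'ad,'e1,'e2) adj \<Rightarrow> ('oc \<Rightarrow> 'e2 \<Rightarrow> 'e2)" where
  "AM_box A = (\<lambda>X b. alam A X (drx (aP A) (aeta A X) (arho A (fo (aL A) X) b)))"

definition AM_1 :: "('oc,'ac,'od,'ad,'e1,'e2) adj \<Rightarrow>
    ('oc,'ac,'od,'ad,'e1,'e2,'oc2,'ac2,'od2,'ad2,'f1,'f2) amor \<Rightarrow>
    ('oc,'ac,'oc2,'ac2,'e2,'f2) idx1" where
  "AM_1 A M = (mF M, (\<lambda>X. mg M (fo (aL A) X)))"

definition AM_2 :: "('oc \<Rightarrow> 'ac2) \<times> ('od \<Rightarrow> 'ad2) \<Rightarrow> ('oc \<Rightarrow> 'ac2)" where
  "AM_2 ab = fst ab"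

end

theory Submission
  imports Defs
begin

lemma homD: "f \<in> hom C X Y \<Longrightarrow> f \<in> carr C \<and> cdom C f = X \<and> ccod C f = Y"
  by (simp add: hom_def)

lemma homI: "f \<in> carr C \<Longrightarrow> cdom C f = X \<Longrightarrow> ccod C f = Y \<Longrightarrow> f \<in> hom C X Y"
  by (simp add: hom_def)

lemma hom_comp: "category C \<Longrightarrow> f \<in> hom C X Y \<Longrightarrow> g \<in> hom C Y Z \<Longrightarrow> ccomp C g f \<in> hom C X Z"
  unfolding category_def hom_def by auto

lemma hom_obj: "category C \<Longrightarrow> f \<in> hom C X Y \<Longrightarrow> X \<in> cobj C \<and> Y \<in> cobj C"
  unfolding category_def hom_def by auto

lemma doc_mem: "is_doctrine C P \<Longrightarrow> t \<in> hom C X Y \<Longrightarrow> a \<in> dcar P Y \<Longrightarrow> drx P t a \<in> dcar P X"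
  unfolding is_doctrine_def hom_def by auto

lemma doc_mono: "is_doctrine C P \<Longrightarrow> t \<in> hom C X Y \<Longrightarrow> a \<in> dcar P Y \<Longrightarrow> b \<in> dcar P Y \<Longrightarrow>
   dle P Y a b \<Longrightarrow> dle P X (drx P t a) (drx P t b)"
  unfolding is_doctrine_def hom_def by auto

lemma doc_id: "is_doctrine C P \<Longrightarrow> X \<in> cobj C \<Longrightarrow> a \<in> dcar P X \<Longrightarrow> drx P (cid C X) a = a"
  unfolding is_doctrine_def by auto

lemma doc_compo: "is_doctrine C P \<Longrightarrow> f \<in> hom C X Y \<Longrightarrow> g \<in> hom C Y Z \<Longrightarrow> a \<in> dcar P Z \<Longrightarrow>
   drx P (ccomp C g f) a = drx P f (drx P g a)"
  unfolding is_doctrine_def hom_def by auto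

lemma doc_refl: "is_doctrine C P \<Longrightarrow> X \<in> cobj C \<Longrightarrow> a \<in> dcar P X \<Longrightarrow> dle P X a a"
  unfolding is_doctrine_def by auto

lemma doc_trans: "is_doctrine C P \<Longrightarrow> X \<in> cobj C \<Longrightarrow> a \<in> dcar P X \<Longrightarrow> b \<in> dcar P X \<Longrightarrow>
   c \<in> dcar P X \<Longrightarrow> dle P X a b \<Longrightarrow> dle P X b c \<Longrightarrow> dle P X a c"
  unfolding is_doctrine_def by blast

lemma fun_obj: "is_functor C D F \<Longrightarrow> X \<in> cobj C \<Longrightarrow> fo F X \<in> cobj D"
  unfolding is_functor_def by auto

lemma fun_hom: "is_functor C D F \<Longrightarrow> f \<in> hom C X Y \<Longrightarrow> fa F f \<in> hom D (fo F X) (fo F Y)"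
  unfolding is_functor_def hom_def by auto

lemma fun_id: "is_functor C D F \<Longrightarrow> X \<in> cobj C \<Longrightarrow> fa F (cid C X) = cid D (fo F X)"
  unfolding is_functor_def by auto

lemma fun_comp: "is_functor C D F \<Longrightarrow> f \<in> hom C X Y \<Longrightarrow> g \<in> hom C Y Z \<Longrightarrow>
   fa F (ccomp C g f) = ccomp D (fa F g) (fa F f)"
  unfolding is_functor_def hom_def by auto

lemma nat_hom: "is_nat C D F G th \<Longrightarrow> X \<in> cobj C \<Longrightarrow> th X \<in> hom D (fo F X) (fo G X)"
  unfolding is_nat_def by auto

lemma nat_sq: "is_nat C D F G th \<Longrightarrow> f \<in> hom C X Y \<Longrightarrow>
   ccomp D (th Y) (fa F f) = ccomp D (fa G f) (th X)"
  unfolding is_nat_def hom_def by auto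

lemma dnat_mem: "is_dnat C P P' f \<Longrightarrow> X \<in> cobj C \<Longrightarrow> a \<in> dcar P X \<Longrightarrow> f X a \<in> dcar P' X"
  unfolding is_dnat_def by auto

lemma dnat_mono: "is_dnat C P P' f \<Longrightarrow> X \<in> cobj C \<Longrightarrow> a \<in> dcar P X \<Longrightarrow> b \<in> dcar P X \<Longrightarrow>
   dle P X a b \<Longrightarrow> dle P' X (f X a) (f X b)"
  unfolding is_dnat_def by auto

lemma dnat_nat: "is_dnat C P P' f \<Longrightarrow> t \<in> hom C X Y \<Longrightarrow> a \<in> dcar P Y \<Longrightarrow>
   f X (drx P t a) = drx P' t (f Y a)"
  unfolding is_dnat_def hom_def by auto

lemma cid_hom: "category C \<Longrightarrow> X \<in> cobj C \<Longrightarrow> cid C X \<in> hom C X X"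
  unfolding category_def by auto

lemma doc_comp_simps[simp]: "dcar (doc_comp Q F) X = dcar Q (fo F X)"
  "dle (doc_comp Q F) X = dle Q (fo F X)" "drx (doc_comp Q F) t = drx Q (fa F t)"
  by (simp_all add: doc_comp_def)

lemma fcomp_simps[simp]: "fo (fcomp G F) X = fo G (fo F X)" "fa (fcomp G F) f = fa G (fa F f)"
  by (simp_all add: fcomp_def)

lemma fid_simps[simp]: "fo fid X = X" "fa fid f = f"
  by (simp_all add: fid_def)

lemma part1a:
  assumes "is_adj A" shows "is_doctrine (aC A) (AM_doc A)"
proof -
  from assms have C: "category (aC A)" and Q: "is_doctrine (aD A) (aQ A)"
    and L: "is_functor (aC A) (aD A) (aL A)" unfolding is_adj_def by auto
  have LO: "\<And>X. X \<in> cobj (aC A) \<Longrightarrow> fo (aL A) X \<in> cobj (aD A)" by (rule fun_obj[OF L])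
  have LH: "\<And>t. t \<in> carr (aC A) \<Longrightarrow> fa (aL A) t \<in> hom (aD A) (fo (aL A) (cdom (aC A) t)) (fo (aL A) (ccod (aC A) t))"
    using L by (simp add: homI fun_hom)
  show ?thesis unfolding AM_doc_def is_doctrine_def doc_comp_simps
  proof (intro conjI ballI impI allI)
    fix X a assume "X \<in> cobj (aC A)" "a \<in> dcar (aQ A) (fo (aL A) X)"
    then show "dle (aQ A) (fo (aL A) X) a a" using doc_refl[OF Q LO] by blast
  next
    fix X a b assume "X \<in> cobj (aC A)" "a \<in> dcar (aQ A) (fo (aL A) X)" "b \<in> dcar (aQ A) (fo (aL A) X)"
      "dle (aQ A) (fo (aL A) X) a b \<and> dle (aQ A) (fo (aL A) X) b a"
    then show "a = b" using Q LO unfolding is_doctrine_def by blast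
  next
    fix X a b c assume "X \<in> cobj (aC A)" "a \<in> dcar (aQ A) (fo (aL A) X)" "b \<in> dcar (aQ A) (fo (aL A) X)"
      "c \<in> dcar (aQ A) (fo (aL A) X)"
      "dle (aQ A) (fo (aL A) X) a b \<and> dle (aQ A) (fo (aL A) X) b c"
    then show "dle (aQ A) (fo (aL A) X) a c" using doc_trans[OF Q LO] by blast
  next
    fix t a assume "t \<in> carr (aC A)" "a \<in> dcar (aQ A) (fo (aL A) (ccod (aC A) t))"
    then show "drx (aQ A) (fa (aL A) t) a \<in> dcar (aQ A) (fo (aL A) (cdom (aC A) t))"
      using doc_mem[OF Q LH] by blast
  next
    fix t a b assume "t \<in> carr (aC A)" "a \<in> dcar (aQ A) (fo (aL A) (ccod (aC A) t))"
      "b \<in> dcar (aQ A) (fo (aL A) (ccod (aC A) t))" "dle (aQ A) (fo (aL A) (ccod (aC A) t)) a b"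
    then show "dle (aQ A) (fo (aL A) (cdom (aC A) t)) (drx (aQ A) (fa (aL A) t) a) (drx (aQ A) (fa (aL A) t) b)"
      using doc_mono[OF Q LH] by blast
  next
    fix X a assume "X \<in> cobj (aC A)" "a \<in> dcar (aQ A) (fo (aL A) X)"
    then show "drx (aQ A) (fa (aL A) (cid (aC A) X)) a = a"
      using fun_id[OF L] doc_id[OF Q LO] by simp
  next
    fix f g a assume f: "f \<in> carr (aC A)" and g: "g \<in> carr (aC A)" and e: "ccod (aC A) f = cdom (aC A) g"
      and a: "a \<in> dcar (aQ A) (fo (aL A) (ccod (aC A) g))"
    have fh: "f \<in> hom (aC A) (cdom (aC A) f) (cdom (aC A) g)" using f e by (simp add: homI)
    have gh: "g \<in> hom (aC A) (cdom (aC A) g) (ccod (aC A) g)" using g by (simp add: homI)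
    show "drx (aQ A) (fa (aL A) (ccomp (aC A) g f)) a = drx (aQ A) (fa (aL A) f) (drx (aQ A) (fa (aL A) g) a)"
      using fun_comp[OF L fh gh] doc_compo[OF Q fun_hom[OF L fh] fun_hom[OF L gh] a] by simp
  qed
qed


lemma adj_facts:
  assumes "is_adj A"
  shows "category (aC A)" "category (aD A)" "is_doctrine (aC A) (aP A)" "is_doctrine (aD A) (aQ A)"
    "is_functor (aC A) (aD A) (aL A)" "is_functor (aD A) (aC A) (aR A)"
    "is_nat (aC A) (aC A) fid (fcomp (aR A) (aL A)) (aeta A)"
    "\<And>X. X \<in> cobj (aC A) \<Longrightarrow> ccomp (aD A) (aeps A (fo (aL A) X)) (fa (aL A) (aeta A X)) = cid (aD A) (fo (aL A) X)"
    "is_dnat (aC A) (aP A) (doc_comp (aQ A) (aL A)) (alam A)"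
    "is_dnat (aD A) (aQ A) (doc_comp (aP A) (aR A)) (arho A)"
    "\<And>X a. X \<in> cobj (aC A) \<Longrightarrow> a \<in> dcar (aP A) X \<Longrightarrow>
       dle (aP A) X a (drx (aP A) (aeta A X) (arho A (fo (aL A) X) (alam A X a)))"
    "\<And>Y b. Y \<in> cobj (aD A) \<Longrightarrow> b \<in> dcar (aQ A) Y \<Longrightarrow>
       dle (aQ A) (fo (aL A) (fo (aR A) Y)) (alam A (fo (aR A) Y) (arho A Y b)) (drx (aQ A) (aeps A Y) b)"
    "is_nat (aD A) (aD A) (fcomp (aL A) (aR A)) fid (aeps A)"
  using assms unfolding is_adj_def by auto

lemma eta_hom: "is_adj A \<Longrightarrow> X \<in> cobj (aC A) \<Longrightarrow> aeta A X \<in> hom (aC A) X (fo (aR A) (fo (aL A) X))"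
  using nat_hom[OF adj_facts(7)] by fastforce

lemma eps_hom: "is_adj A \<Longrightarrow> Y \<in> cobj (aD A) \<Longrightarrow> aeps A Y \<in> hom (aD A) (fo (aL A) (fo (aR A) Y)) Y"
  using nat_hom[OF adj_facts(13)] by fastforce

lemma box_mem:
  assumes A: "is_adj A" and X: "X \<in> cobj (aC A)" and b: "b \<in> dcar (aQ A) (fo (aL A) X)"
  shows "drx (aP A) (aeta A X) (arho A (fo (aL A) X) b) \<in> dcar (aP A) X"
    "arho A (fo (aL A) X) b \<in> dcar (aP A) (fo (aR A) (fo (aL A) X))"
    "AM_box A X b \<in> dcar (aQ A) (fo (aL A) X)"
proof -
  note F = adj_facts[OF A]
  have LX: "fo (aL A) X \<in> cobj (aD A)" by (rule fun_obj[OF F(5) X])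
  show r: "arho A (fo (aL A) X) b \<in> dcar (aP A) (fo (aR A) (fo (aL A) X))"
    using dnat_mem[OF F(10) LX b] by simp
  show p: "drx (aP A) (aeta A X) (arho A (fo (aL A) X) b) \<in> dcar (aP A) X"
    by (rule doc_mem[OF F(3) eta_hom[OF A X] r])
  show "AM_box A X b \<in> dcar (aQ A) (fo (aL A) X)"
    unfolding AM_box_def using dnat_mem[OF F(9) X p] by simp
qed

lemma part1b:
  assumes A: "is_adj A" shows "interior_op (aC A) (AM_doc A) (AM_box A)"
proof -
  note F = adj_facts[OF A]
  note LO = fun_obj[OF F(5)]
  have dn: "is_dnat (aC A) (AM_doc A) (AM_doc A) (AM_box A)"
    unfolding is_dnat_def AM_doc_def doc_comp_simps
  proof (intro conjI ballI impI allI)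
    fix X a assume "X \<in> cobj (aC A)" "a \<in> dcar (aQ A) (fo (aL A) X)"
    then show "AM_box A X a \<in> dcar (aQ A) (fo (aL A) X)" using box_mem[OF A] by blast
  next
    fix X a b assume X: "X \<in> cobj (aC A)" and a: "a \<in> dcar (aQ A) (fo (aL A) X)"
      and b: "b \<in> dcar (aQ A) (fo (aL A) X)" and le: "dle (aQ A) (fo (aL A) X) a b"
    have 1: "dle (aP A) (fo (aR A) (fo (aL A) X)) (arho A (fo (aL A) X) a) (arho A (fo (aL A) X) b)"
      using dnat_mono[OF F(10) LO[OF X] a b le] by simp
    have 2: "dle (aP A) X (drx (aP A) (aeta A X) (arho A (fo (aL A) X) a)) (drx (aP A) (aeta A X) (arho A (fo (aL A) X) b))"
      by (rule doc_mono[OF F(3) eta_hom[OF A X] box_mem(2)[OF A X a] box_mem(2)[OF A X b] 1])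
    show "dle (aQ A) (fo (aL A) X) (AM_box A X a) (AM_box A X b)"
      unfolding AM_box_def using dnat_mono[OF F(9) X box_mem(1)[OF A X a] box_mem(1)[OF A X b] 2] by simp
  next
    fix t a assume t: "t \<in> carr (aC A)" and a: "a \<in> dcar (aQ A) (fo (aL A) (ccod (aC A) t))"
    define X where "X = cdom (aC A) t"
    define Y where "Y = ccod (aC A) t"
    have th: "t \<in> hom (aC A) X Y" using t by (simp add: homI X_def Y_def)
    have X: "X \<in> cobj (aC A)" and Y: "Y \<in> cobj (aC A)" using hom_obj[OF F(1) th] by auto
    have a: "a \<in> dcar (aQ A) (fo (aL A) Y)" using a Y_def by simp
    have Lt: "fa (aL A) t \<in> hom (aD A) (fo (aL A) X) (fo (aL A) Y)" by (rule fun_hom[OF F(5) th])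
    have RLt: "fa (aR A) (fa (aL A) t) \<in> hom (aC A) (fo (aR A) (fo (aL A) X)) (fo (aR A) (fo (aL A) Y))"
      by (rule fun_hom[OF F(6) Lt])
    have r: "arho A (fo (aL A) Y) a \<in> dcar (aP A) (fo (aR A) (fo (aL A) Y))" using box_mem(2)[OF A Y a] .
    have s1: "arho A (fo (aL A) X) (drx (aQ A) (fa (aL A) t) a) = drx (aP A) (fa (aR A) (fa (aL A) t)) (arho A (fo (aL A) Y) a)"
      using dnat_nat[OF F(10) Lt a] by simp
    have sq: "ccomp (aC A) (aeta A Y) t = ccomp (aC A) (fa (aR A) (fa (aL A) t)) (aeta A X)"
      using nat_sq[OF F(7) th] by simp
    have s2: "drx (aP A) (aeta A X) (drx (aP A) (fa (aR A) (fa (aL A) t)) (arho A (fo (aL A) Y) a))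
        = drx (aP A) t (drx (aP A) (aeta A Y) (arho A (fo (aL A) Y) a))"
      using doc_compo[OF F(3) eta_hom[OF A X] RLt r] doc_compo[OF F(3) th eta_hom[OF A Y] r] sq by simp
    have s3: "alam A X (drx (aP A) t (drx (aP A) (aeta A Y) (arho A (fo (aL A) Y) a)))
       = drx (aQ A) (fa (aL A) t) (alam A Y (drx (aP A) (aeta A Y) (arho A (fo (aL A) Y) a)))"
      using dnat_nat[OF F(9) th box_mem(1)[OF A Y a]] by simp
    show "AM_box A (cdom (aC A) t) (drx (aQ A) (fa (aL A) t) a) =
          drx (aQ A) (fa (aL A) t) (AM_box A (ccod (aC A) t) a)"
      unfolding AM_box_def X_def[symmetric] Y_def[symmetric] using s1 s2 s3 by simp
  qed
  show ?thesis unfolding interior_op_def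
  proof (intro conjI dn ballI)
    fix X b assume X: "X \<in> cobj (aC A)" and b: "b \<in> dcar (AM_doc A) X"
    have b: "b \<in> dcar (aQ A) (fo (aL A) X)" using b by (simp add: AM_doc_def)
    have LX: "fo (aL A) X \<in> cobj (aD A)" by (rule LO[OF X])
    note eh = eta_hom[OF A X]
    have Leh: "fa (aL A) (aeta A X) \<in> hom (aD A) (fo (aL A) X) (fo (aL A) (fo (aR A) (fo (aL A) X)))"
      by (rule fun_hom[OF F(5) eh])
    note r = box_mem(2)[OF A X b]
    note p = box_mem(1)[OF A X b]
    have RLX: "fo (aR A) (fo (aL A) X) \<in> cobj (aC A)" by (rule fun_obj[OF F(6) LX])
    have lr: "alam A (fo (aR A) (fo (aL A) X)) (arho A (fo (aL A) X) b) \<in> dcar (aQ A) (fo (aL A) (fo (aR A) (fo (aL A) X)))"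
      using dnat_mem[OF F(9) RLX r] by simp
    have eb: "drx (aQ A) (aeps A (fo (aL A) X)) b \<in> dcar (aQ A) (fo (aL A) (fo (aR A) (fo (aL A) X)))"
      by (rule doc_mem[OF F(4) eps_hom[OF A LX] b])
    have c1: "dle (aQ A) (fo (aL A) (fo (aR A) (fo (aL A) X))) (alam A (fo (aR A) (fo (aL A) X)) (arho A (fo (aL A) X) b))
       (drx (aQ A) (aeps A (fo (aL A) X)) b)" by (rule F(12)[OF LX b])
    have c2: "dle (aQ A) (fo (aL A) X) (drx (aQ A) (fa (aL A) (aeta A X)) (alam A (fo (aR A) (fo (aL A) X)) (arho A (fo (aL A) X) b)))
       (drx (aQ A) (fa (aL A) (aeta A X)) (drx (aQ A) (aeps A (fo (aL A) X)) b))"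
      by (rule doc_mono[OF F(4) Leh lr eb c1])
    have c3: "drx (aQ A) (fa (aL A) (aeta A X)) (drx (aQ A) (aeps A (fo (aL A) X)) b) = b"
      using doc_compo[OF F(4) Leh eps_hom[OF A LX] b, symmetric] F(8)[OF X] doc_id[OF F(4) LX b] by simp
    have c4: "AM_box A X b = drx (aQ A) (fa (aL A) (aeta A X)) (alam A (fo (aR A) (fo (aL A) X)) (arho A (fo (aL A) X) b))"
      unfolding AM_box_def using dnat_nat[OF F(9) eh r] by simp
    show "dle (AM_doc A) X (AM_box A X b) b" using c2 c3 c4 by (simp add: AM_doc_def)
    have u: "dle (aP A) X (drx (aP A) (aeta A X) (arho A (fo (aL A) X) b))
       (drx (aP A) (aeta A X) (arho A (fo (aL A) X) (alam A X (drx (aP A) (aeta A X) (arho A (fo (aL A) X) b)))))"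
      by (rule F(11)[OF X p])
    have bb: "AM_box A X b \<in> dcar (aQ A) (fo (aL A) X)" by (rule box_mem(3)[OF A X b])
    have "dle (aQ A) (fo (aL A) X) (AM_box A X b) (AM_box A X (AM_box A X b))"
      using dnat_mono[OF F(9) X p box_mem(1)[OF A X bb]] u by (simp add: AM_box_def)
    then show "dle (AM_doc A) X (AM_box A X b) (AM_box A X (AM_box A X b))" by (simp add: AM_doc_def)
  qed
qed


lemma m1_facts:
  assumes "is_adj_1arrow A B M"
  shows "is_functor (aC A) (aC B) (mF M)" "is_dnat (aC A) (aP A) (doc_comp (aP B) (mF M)) (mf M)"
    "is_functor (aD A) (aD B) (mG M)" "is_dnat (aD A) (aQ A) (doc_comp (aQ B) (mG M)) (mg M)"
    "is_nat (aD A) (aC B) (fcomp (mF M) (aR A)) (fcomp (aR B) (mG M)) (mth M)"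
    "\<And>X. X \<in> cobj (aC A) \<Longrightarrow> fo (mG M) (fo (aL A) X) = fo (aL B) (fo (mF M) X)"
    "\<And>f. f \<in> carr (aC A) \<Longrightarrow> fa (mG M) (fa (aL A) f) = fa (aL B) (fa (mF M) f)"
    "\<And>X. X \<in> cobj (aC A) \<Longrightarrow> ccomp (aC B) (mth M (fo (aL A) X)) (fa (mF M) (aeta A X)) = aeta B (fo (mF M) X)"
    "\<And>X a. X \<in> cobj (aC A) \<Longrightarrow> a \<in> dcar (aP A) X \<Longrightarrow>
       mg M (fo (aL A) X) (alam A X a) = alam B (fo (mF M) X) (mf M X a)"
    "\<And>Y b. Y \<in> cobj (aD A) \<Longrightarrow> b \<in> dcar (aQ A) Y \<Longrightarrow>
       dle (aP B) (fo (mF M) (fo (aR A) Y)) (mf M (fo (aR A) Y) (arho A Y b))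
         (drx (aP B) (mth M Y) (arho B (fo (mG M) Y) (mg M Y b)))"
  using assms unfolding is_adj_1arrow_def idx_1arrow_def feq_def by auto

lemma part2:
  assumes A: "is_adj A" and B: "is_adj B" and M: "is_adj_1arrow A B M"
  shows "box_1arrow (aC A) (aC B) (AM_doc A) (AM_box A) (AM_doc B) (AM_box B) (AM_1 A M)"
proof -
  note FA = adj_facts[OF A] and FB = adj_facts[OF B] and FM = m1_facts[OF M]
  have i1: "idx_1arrow (aC A) (aC B) (AM_doc A) (AM_doc B) (AM_1 A M)"
    unfolding idx_1arrow_def AM_1_def fst_conv snd_conv
  proof (intro conjI FM(1))
    show "is_dnat (aC A) (AM_doc A) (doc_comp (AM_doc B) (mF M)) (\<lambda>X. mg M (fo (aL A) X))"
      unfolding is_dnat_def AM_doc_def doc_comp_simps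
    proof (intro conjI ballI impI allI)
      fix X a assume X: "X \<in> cobj (aC A)" and a: "a \<in> dcar (aQ A) (fo (aL A) X)"
      show "mg M (fo (aL A) X) a \<in> dcar (aQ B) (fo (aL B) (fo (mF M) X))"
        using dnat_mem[OF FM(4) fun_obj[OF FA(5) X] a] FM(6)[OF X] by simp
    next
      fix X a b assume X: "X \<in> cobj (aC A)" and a: "a \<in> dcar (aQ A) (fo (aL A) X)"
        and b: "b \<in> dcar (aQ A) (fo (aL A) X)" and le: "dle (aQ A) (fo (aL A) X) a b"
      show "dle (aQ B) (fo (aL B) (fo (mF M) X)) (mg M (fo (aL A) X) a) (mg M (fo (aL A) X) b)"
        using dnat_mono[OF FM(4) fun_obj[OF FA(5) X] a b le] FM(6)[OF X] by simp
    next
      fix t a assume t: "t \<in> carr (aC A)" and a: "a \<in> dcar (aQ A) (fo (aL A) (ccod (aC A) t))"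
      have th: "t \<in> hom (aC A) (cdom (aC A) t) (ccod (aC A) t)" using t by (simp add: homI)
      show "mg M (fo (aL A) (cdom (aC A) t)) (drx (aQ A) (fa (aL A) t) a) =
         drx (aQ B) (fa (aL B) (fa (mF M) t)) (mg M (fo (aL A) (ccod (aC A) t)) a)"
        using dnat_nat[OF FM(4) fun_hom[OF FA(5) th] a] FM(7)[OF t] by simp
    qed
  qed
  show ?thesis unfolding box_1arrow_def
  proof (intro conjI i1 ballI)
    fix X b assume X: "X \<in> cobj (aC A)" and b: "b \<in> dcar (AM_doc A) X"
    have b: "b \<in> dcar (aQ A) (fo (aL A) X)" using b by (simp add: AM_doc_def)
    define Y where "Y = fo (aL A) X"
    have Y: "Y \<in> cobj (aD A)" unfolding Y_def by (rule fun_obj[OF FA(5) X])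
    have bY: "b \<in> dcar (aQ A) Y" using b Y_def by simp
    have FX: "fo (mF M) X \<in> cobj (aC B)" by (rule fun_obj[OF FM(1) X])
    note eh = eta_hom[OF A X]
    have Feh: "fa (mF M) (aeta A X) \<in> hom (aC B) (fo (mF M) X) (fo (mF M) (fo (aR A) Y))"
      using fun_hom[OF FM(1) eh] Y_def by simp
    have thh: "mth M Y \<in> hom (aC B) (fo (mF M) (fo (aR A) Y)) (fo (aR B) (fo (mG M) Y))"
      using nat_hom[OF FM(5) Y] by simp
    have GY: "fo (mG M) Y = fo (aL B) (fo (mF M) X)" using FM(6)[OF X] Y_def by simp
    have GYo: "fo (mG M) Y \<in> cobj (aD B)" by (rule fun_obj[OF FM(3) Y])
    have gb: "mg M Y b \<in> dcar (aQ B) (fo (mG M) Y)" using dnat_mem[OF FM(4) Y bY] by simp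
    have rb: "arho B (fo (mG M) Y) (mg M Y b) \<in> dcar (aP B) (fo (aR B) (fo (mG M) Y))"
      using dnat_mem[OF FB(10) GYo gb] by simp
    have r: "arho A Y b \<in> dcar (aP A) (fo (aR A) Y)" using dnat_mem[OF FA(10) Y bY] by simp
    have RY: "fo (aR A) Y \<in> cobj (aC A)" by (rule fun_obj[OF FA(6) Y])
    have fr: "mf M (fo (aR A) Y) (arho A Y b) \<in> dcar (aP B) (fo (mF M) (fo (aR A) Y))"
      using dnat_mem[OF FM(2) RY r] by simp
    have pr: "drx (aP A) (aeta A X) (arho A Y b) \<in> dcar (aP A) X"
      using doc_mem[OF FA(3) eh] r Y_def by simp
    have e1: "mg M Y (AM_box A X b) = alam B (fo (mF M) X) (mf M X (drx (aP A) (aeta A X) (arho A Y b)))"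
      unfolding AM_box_def Y_def using FM(9)[OF X pr[unfolded Y_def]] by simp
    have e2: "mf M X (drx (aP A) (aeta A X) (arho A Y b)) = drx (aP B) (fa (mF M) (aeta A X)) (mf M (fo (aR A) Y) (arho A Y b))"
      using dnat_nat[OF FM(2) eh] r Y_def by simp
    have le1: "dle (aP B) (fo (mF M) (fo (aR A) Y)) (mf M (fo (aR A) Y) (arho A Y b))
         (drx (aP B) (mth M Y) (arho B (fo (mG M) Y) (mg M Y b)))" by (rule FM(10)[OF Y bY])
    have tr: "drx (aP B) (mth M Y) (arho B (fo (mG M) Y) (mg M Y b)) \<in> dcar (aP B) (fo (mF M) (fo (aR A) Y))"
      by (rule doc_mem[OF FB(3) thh rb])
    have le2: "dle (aP B) (fo (mF M) X) (drx (aP B) (fa (mF M) (aeta A X)) (mf M (fo (aR A) Y) (arho A Y b)))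
       (drx (aP B) (fa (mF M) (aeta A X)) (drx (aP B) (mth M Y) (arho B (fo (mG M) Y) (mg M Y b))))"
      by (rule doc_mono[OF FB(3) Feh fr tr le1])
    have e3: "drx (aP B) (fa (mF M) (aeta A X)) (drx (aP B) (mth M Y) (arho B (fo (mG M) Y) (mg M Y b)))
       = drx (aP B) (aeta B (fo (mF M) X)) (arho B (fo (aL B) (fo (mF M) X)) (mg M Y b))"
      using doc_compo[OF FB(3) Feh thh rb, symmetric] FM(8)[OF X] Y_def GY by simp
    have m1: "drx (aP B) (fa (mF M) (aeta A X)) (mf M (fo (aR A) Y) (arho A Y b)) \<in> dcar (aP B) (fo (mF M) X)"
      by (rule doc_mem[OF FB(3) Feh fr])
    have m2: "drx (aP B) (aeta B (fo (mF M) X)) (arho B (fo (aL B) (fo (mF M) X)) (mg M Y b)) \<in> dcar (aP B) (fo (mF M) X)"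
      using doc_mem[OF FB(3) Feh tr] e3 by simp
    have le3: "dle (aQ B) (fo (aL B) (fo (mF M) X))
       (alam B (fo (mF M) X) (drx (aP B) (fa (mF M) (aeta A X)) (mf M (fo (aR A) Y) (arho A Y b))))
       (alam B (fo (mF M) X) (drx (aP B) (aeta B (fo (mF M) X)) (arho B (fo (aL B) (fo (mF M) X)) (mg M Y b))))"
      using dnat_mono[OF FB(9) FX m1 m2] le2 e3 by simp
    show "dle (AM_doc B) (fo (fst (AM_1 A M)) X) (snd (AM_1 A M) X (AM_box A X b))
          (AM_box B (fo (fst (AM_1 A M)) X) (snd (AM_1 A M) X b))"
      unfolding AM_1_def AM_doc_def fst_conv snd_conv doc_comp_simps
      using le3 e1 e2 unfolding AM_box_def Y_def by simp
  qed
qed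


lemma part3:
  assumes A: "is_adj A" and M: "is_adj_1arrow A B M" and N: "is_adj_1arrow A B N"
    and ab: "is_adj_2arrow A B M N ab"
  shows "idx_2arrow (aC A) (aC B) (AM_doc A) (AM_doc B) (AM_1 A M) (AM_1 A N) (AM_2 ab)"
proof -
  note FA = adj_facts[OF A] and FM = m1_facts[OF M] and FN = m1_facts[OF N]
  from ab have n: "is_nat (aC A) (aC B) (mF M) (mF N) (fst ab)"
    and b2: "\<And>Y b. Y \<in> cobj (aD A) \<Longrightarrow> b \<in> dcar (aQ A) Y \<Longrightarrow>
       dle (aQ B) (fo (mG M) Y) (mg M Y b) (drx (aQ B) (snd ab Y) (mg N Y b))"
    and lb: "\<And>X. X \<in> cobj (aC A) \<Longrightarrow> fa (aL B) (fst ab X) = snd ab (fo (aL A) X)"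
    unfolding is_adj_2arrow_def idx_2arrow_def by auto
  show ?thesis unfolding idx_2arrow_def AM_1_def AM_2_def fst_conv snd_conv
  proof (intro conjI n ballI)
    fix X b assume X: "X \<in> cobj (aC A)" and b: "b \<in> dcar (AM_doc A) X"
    have b: "b \<in> dcar (aQ A) (fo (aL A) X)" using b by (simp add: AM_doc_def)
    show "dle (AM_doc B) (fo (mF M) X) (mg M (fo (aL A) X) b) (drx (AM_doc B) (fst ab X) (mg N (fo (aL A) X) b))"
      using b2[OF fun_obj[OF FA(5) X] b] lb[OF X] FM(6)[OF X] by (simp add: AM_doc_def)
  qed
qed

lemma p4: "idx_eq1 (aC A) (AM_doc A) (AM_1 A (adj_id1 A)) idx_id1"
  by (simp add: idx_eq1_def AM_1_def adj_id1_def idx_id1_def feq_def)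

lemma p5: "is_adj_1arrow A B M \<Longrightarrow> idx_eq1 (aC A) (AM_doc A) (AM_1 A (adj_comp1 Cc M' M)) (idx_comp1 (AM_1 B M') (AM_1 A M))"
  using m1_facts(6)[of A B M]
  by (simp add: idx_eq1_def AM_1_def adj_comp1_def idx_comp1_def feq_def)

lemma p6: "nat_eq (aC A) (AM_2 (adj_id2 B M)) (nat_id (aC B) (fst (AM_1 A M)))"
  by (simp add: nat_eq_def AM_2_def adj_id2_def AM_1_def)

lemma p7: "nat_eq (aC A) (AM_2 (adj_vcomp2 B ab' ab)) (vcomp (aC B) (AM_2 ab') (AM_2 ab))"
  by (simp add: nat_eq_def AM_2_def adj_vcomp2_def)

lemma p8: "nat_eq (aC A) (AM_2 (adj_hcomp2 Cc M' ab' N ab))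
          (hcomp (aC Cc) (fst (AM_1 B M')) (AM_2 ab') (fst (AM_1 A N)) (AM_2 ab))"
  by (simp add: nat_eq_def AM_2_def adj_hcomp2_def AM_1_def)

theorem proposition5p13:
  shows
  "(\<forall>A. is_adj A \<longrightarrow>
        is_doctrine (aC A) (AM_doc A) \<and> interior_op (aC A) (AM_doc A) (AM_box A)) \<and>
   (\<forall>A B M. is_adj A \<and> is_adj B \<and> is_adj_1arrow A B M \<longrightarrow>
        box_1arrow (aC A) (aC B) (AM_doc A) (AM_box A) (AM_doc B) (AM_box B) (AM_1 A M)) \<and>
   (\<forall>A B M N ab. is_adj A \<and> is_adj B \<and> is_adj_1arrow A B M \<and> is_adj_1arrow A B N \<and>
        is_adj_2arrow A B M N ab \<longrightarrow>
        idx_2arrow (aC A) (aC B) (AM_doc A) (AM_doc B) (AM_1 A M) (AM_1 A N) (AM_2 ab)) \<and>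
   (\<forall>A. is_adj A \<longrightarrow> idx_eq1 (aC A) (AM_doc A) (AM_1 A (adj_id1 A)) idx_id1) \<and>
   (\<forall>A B Cc M M'. is_adj A \<and> is_adj B \<and> is_adj Cc \<and> is_adj_1arrow A B M \<and> is_adj_1arrow B Cc M' \<longrightarrow>
        idx_eq1 (aC A) (AM_doc A) (AM_1 A (adj_comp1 Cc M' M)) (idx_comp1 (AM_1 B M') (AM_1 A M))) \<and>
   (\<forall>A B M. is_adj A \<and> is_adj B \<and> is_adj_1arrow A B M \<longrightarrow>
        nat_eq (aC A) (AM_2 (adj_id2 B M)) (nat_id (aC B) (fst (AM_1 A M)))) \<and>
   (\<forall>A B M N K ab ab'. is_adj A \<and> is_adj B \<and> is_adj_1arrow A B M \<and> is_adj_1arrow A B N \<and>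
        is_adj_1arrow A B K \<and> is_adj_2arrow A B M N ab \<and> is_adj_2arrow A B N K ab' \<longrightarrow>
        nat_eq (aC A) (AM_2 (adj_vcomp2 B ab' ab)) (vcomp (aC B) (AM_2 ab') (AM_2 ab))) \<and>
   (\<forall>A B Cc M N M' N' ab ab'. is_adj A \<and> is_adj B \<and> is_adj Cc \<and>
        is_adj_1arrow A B M \<and> is_adj_1arrow A B N \<and> is_adj_1arrow B Cc M' \<and> is_adj_1arrow B Cc N' \<and>
        is_adj_2arrow A B M N ab \<and> is_adj_2arrow B Cc M' N' ab' \<longrightarrow>
        nat_eq (aC A) (AM_2 (adj_hcomp2 Cc M' ab' N ab))
          (hcomp (aC Cc) (fst (AM_1 B M')) (AM_2 ab') (fst (AM_1 A N)) (AM_2 ab)))"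
  by (intro conjI allI impI) (simp_all add: part1a part1b part2 part3 p4 p5 p6 p7 p8)

end
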